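(* Let $m\ge 2$, let $\mathbb{Z}_m$ be the cyclic group of order $m$ with generator $t$, and let $\Gamma$ be a group acting non-trivially on $\mathbb{Z}_m$ by automorphisms. Let $A$ be a $\mathbb{Z}_m\rtimes\Gamma$-module, put $V=\mathbb{Q}(\mathbb{Z}_m)\otimes_{\mathbb{Z}(\mathbb{Z}_m\rtimes\Gamma)}A$ (which is isomorphic to $\mathbb{Q}\otimes A_\Gamma$), and let $D_*,N_*:V\to V$ be the endomorphisms induced by multiplication by $D=t+\dots+t^{m-1}-(m-1)$ and $N=1+t+\dots+t^{m-1}$ on $\mathbb{Q}(\mathbb{Z}_m)$. Then for every $n\ge1$ $${}_{\mathbb Q}H^\Gamma_{2n-1}(\mathbb{Z}_m,A)\cong \operatorname{Ker}D_*/\operatorname{Im}N_*,\qquad {}_{\mathbb Q}H^\Gamma_{2n}(\mathbb{Z}_m,A)\cong \operatorname{Ker}N_*/\operatorname{Im}D_*.$$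
   Context: For a $\Gamma$-group $G$ (group with $\Gamma$ acting by automorphisms), a $G\rtimes\Gamma$-module is an abelian group with $G$- and $\Gamma$-actions satisfying ${}^{\sigma}({}^{g}a)={}^{{}^{\sigma}g}({}^{\sigma}a)$; $A_\Gamma$ is the quotient of $A$ by the subgroup generated by ${}^{\gamma}a-a$. Let $B_*\to\mathbb{Z}$ be the bar resolution of $G$ ($B_0=\mathbb{Z}(G)$, $B_n$ free $\mathbb{Z}(G)$-module on symbols $[g_1,\dots,g_n]$) with $\Gamma$ acting by ${}^{\gamma}(g[g_1,\dots,g_n])={}^{\gamma}g[{}^{\gamma}g_1,\dots,{}^{\gamma}g_n]$, and $\Gamma$ acting trivially on $\mathbb{Q}$. The rational $\Gamma$-equivariant homology is ${}_{\mathbb Q}H^\Gamma_n(G,A)=H_n\big((B_*\otimes\mathbb{Q})\otimes_{\mathbb{Z}(G\rtimes\Gamma)}A\big)$. Tensor products over $\mathbb{Z}(G\rtimes\Gamma)$ use the standard conversion of left modules to right modules via inverses. *)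

theory Defs
  imports "HOL-Algebra.Algebra" "HOL-Library.Poly_Mapping"
begin

text \<open>The cyclic group Z_m is {0..<m} (type nat) written additively,
 generator t = 1, so t^k = k mod m.  Gamma is a HOL-Algebra group acting on Z_m by
 phi.  The abelian group A is the type 'a, with Z_m acting by rho and Gamma by sigma.
 A basis element g[g1,...,gn] of the bar resolution B_n is the list g # [g1,...,gn];
 B_n (x) Q is the Q-vector space of finitely supported rational combinations of
 such lists.\<close>

definition zm_aut_action :: "nat \<Rightarrow> ('g,'b) monoid_scheme \<Rightarrow> ('g \<Rightarrow> nat \<Rightarrow> nat) \<Rightarrow> bool" where
  "zm_aut_action m \<Gamma> \<phi> \<longleftrightarrow>
     (\<forall>\<gamma>\<in>carrier \<Gamma>. bij_betw (\<phi> \<gamma>) {..<m} {..<m}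
        \<and> (\<forall>g<m. \<forall>h<m. \<phi> \<gamma> ((g + h) mod m) = (\<phi> \<gamma> g + \<phi> \<gamma> h) mod m))
   \<and> (\<forall>\<gamma>\<in>carrier \<Gamma>. \<forall>\<delta>\<in>carrier \<Gamma>. \<forall>g<m. \<phi> (\<gamma> \<otimes>\<^bsub>\<Gamma>\<^esub> \<delta>) g = \<phi> \<gamma> (\<phi> \<delta> g))
   \<and> (\<forall>g<m. \<phi> \<one>\<^bsub>\<Gamma>\<^esub> g = g)"

definition zm_action_nontrivial :: "nat \<Rightarrow> ('g,'b) monoid_scheme \<Rightarrow> ('g \<Rightarrow> nat \<Rightarrow> nat) \<Rightarrow> bool" where
  "zm_action_nontrivial m \<Gamma> \<phi> \<longleftrightarrow> (\<exists>\<gamma>\<in>carrier \<Gamma>. \<exists>g<m. \<phi> \<gamma> g \<noteq> g)"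

text \<open>A is a Z_m \<rtimes> Gamma-module: (h,gamma).a = rho h (sigma gamma a).\<close>
definition sd_module :: "nat \<Rightarrow> ('g,'b) monoid_scheme \<Rightarrow> ('g \<Rightarrow> nat \<Rightarrow> nat)
    \<Rightarrow> (nat \<Rightarrow> 'a::ab_group_add \<Rightarrow> 'a) \<Rightarrow> ('g \<Rightarrow> 'a \<Rightarrow> 'a) \<Rightarrow> bool" where
  "sd_module m \<Gamma> \<phi> \<rho> \<sigma> \<longleftrightarrow>
     (\<forall>g<m. \<forall>a b. \<rho> g (a + b) = \<rho> g a + \<rho> g b)
   \<and> (\<forall>a. \<rho> 0 a = a)
   \<and> (\<forall>g<m. \<forall>h<m. \<forall>a. \<rho> ((g + h) mod m) a = \<rho> g (\<rho> h a))
   \<and> (\<forall>\<gamma>\<in>carrier \<Gamma>. \<forall>a b. \<sigma> \<gamma> (a + b) = \<sigma> \<gamma> a + \<sigma> \<gamma> b)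
   \<and> (\<forall>a. \<sigma> \<one>\<^bsub>\<Gamma>\<^esub> a = a)
   \<and> (\<forall>\<gamma>\<in>carrier \<Gamma>. \<forall>\<delta>\<in>carrier \<Gamma>. \<forall>a. \<sigma> (\<gamma> \<otimes>\<^bsub>\<Gamma>\<^esub> \<delta>) a = \<sigma> \<gamma> (\<sigma> \<delta> a))
   \<and> (\<forall>\<gamma>\<in>carrier \<Gamma>. \<forall>g<m. \<forall>a. \<sigma> \<gamma> (\<rho> g a) = \<rho> (\<phi> \<gamma> g) (\<sigma> \<gamma> a))"

definition qscale :: "rat \<Rightarrow> (nat list \<Rightarrow>\<^sub>0 rat) \<Rightarrow> (nat list \<Rightarrow>\<^sub>0 rat)" where
  "qscale c p = Poly_Mapping.map (\<lambda>v. c * v) p"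

definition qlin :: "(nat list \<Rightarrow> (nat list \<Rightarrow>\<^sub>0 rat)) \<Rightarrow> (nat list \<Rightarrow>\<^sub>0 rat) \<Rightarrow> (nat list \<Rightarrow>\<^sub>0 rat)" where
  "qlin f x = (\<Sum>l\<in>Poly_Mapping.keys x. qscale (Poly_Mapping.lookup x l) (f l))"

definition bar_basis :: "nat \<Rightarrow> nat \<Rightarrow> nat list set" where
  "bar_basis m n = {l. length l = n + 1 \<and> set l \<subseteq> {..<m}}"

definition BQ :: "nat \<Rightarrow> nat \<Rightarrow> (nat list \<Rightarrow>\<^sub>0 rat) set" where
  "BQ m n = {x. Poly_Mapping.keys x \<subseteq> bar_basis m n}"

text \<open>Bar differential on the basis element g[g1,...,gn] = g # gs (n \<ge> 1):
  g g1[g2..gn] + sum_{i=1}^{n-1} (-1)^i g[g1..g_i g_(i+1)..gn] + (-1)^n g[g1..g_(n-1)].\<close>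
definition bar_d :: "nat \<Rightarrow> nat list \<Rightarrow> (nat list \<Rightarrow>\<^sub>0 rat)" where
  "bar_d m l = (let g = hd l; gs = tl l; n = length gs in
     Poly_Mapping.single (((g + hd gs) mod m) # tl gs) 1
     + (\<Sum>i\<in>{1..<n}. Poly_Mapping.single
          (g # (take (i - 1) gs @ [(gs ! (i - 1) + gs ! i) mod m] @ drop (i + 1) gs)) ((-1) ^ i))
     + Poly_Mapping.single (g # butlast gs) ((-1) ^ n))"

text \<open>Action of (h,gamma) \<in> Z_m \<rtimes> Gamma on basis elements:
  (h,gamma).(g[g1..gn]) = (h + gamma g)[gamma g1..gamma gn].\<close>
definition sd_list :: "nat \<Rightarrow> ('g \<Rightarrow> nat \<Rightarrow> nat) \<Rightarrow> nat \<Rightarrow> 'g \<Rightarrow> nat list \<Rightarrow> nat list" where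
  "sd_list m \<phi> h \<gamma> l = ((h + \<phi> \<gamma> (hd l)) mod m) # map (\<phi> \<gamma>) (tl l)"

definition sd_act :: "nat \<Rightarrow> ('g \<Rightarrow> nat \<Rightarrow> nat) \<Rightarrow> nat \<Rightarrow> 'g \<Rightarrow> (nat list \<Rightarrow>\<^sub>0 rat) \<Rightarrow> (nat list \<Rightarrow>\<^sub>0 rat)" where
  "sd_act m \<phi> h \<gamma> x = qlin (\<lambda>l. Poly_Mapping.single (sd_list m \<phi> h \<gamma> l) 1) x"

text \<open>Action of the inverse (h,gamma)^{-1} = (gamma^{-1}(-h), gamma^{-1}).\<close>
definition sd_act_inv :: "nat \<Rightarrow> ('g,'b) monoid_scheme \<Rightarrow> ('g \<Rightarrow> nat \<Rightarrow> nat) \<Rightarrow> nat \<Rightarrow> 'g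
    \<Rightarrow> (nat list \<Rightarrow>\<^sub>0 rat) \<Rightarrow> (nat list \<Rightarrow>\<^sub>0 rat)" where
  "sd_act_inv m \<Gamma> \<phi> h \<gamma> x =
     sd_act m \<phi> (\<phi> (inv\<^bsub>\<Gamma>\<^esub> \<gamma>) ((m - h) mod m)) (inv\<^bsub>\<Gamma>\<^esub> \<gamma>) x"

text \<open>Presented as the free abelian group on (B_n (x) Q) \<times> A modulo biadditivity and
  the balancing relations  x.r (x) a = x (x) r.a  for r \<in> Z_m \<rtimes> Gamma, where the right
  action is x.r = r^{-1} x.\<close>
definition tens_rel :: "nat \<Rightarrow> ('g,'b) monoid_scheme \<Rightarrow> ('g \<Rightarrow> nat \<Rightarrow> nat)
    \<Rightarrow> (nat \<Rightarrow> 'a::ab_group_add \<Rightarrow> 'a) \<Rightarrow> ('g \<Rightarrow> 'a \<Rightarrow> 'a) \<Rightarrow> nat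
    \<Rightarrow> (((nat list \<Rightarrow>\<^sub>0 rat) \<times> 'a) \<Rightarrow>\<^sub>0 int) set" where
  "tens_rel m \<Gamma> \<phi> \<rho> \<sigma> n =
     {frag_of (x + y, a) - frag_of (x, a) - frag_of (y, a) | x y a. x \<in> BQ m n \<and> y \<in> BQ m n}
   \<union> {frag_of (x, a + b) - frag_of (x, a) - frag_of (x, b) | x a b. x \<in> BQ m n}
   \<union> {frag_of (sd_act_inv m \<Gamma> \<phi> h \<gamma> x, a) - frag_of (x, \<rho> h (\<sigma> \<gamma> a)) | x h \<gamma> a.
        x \<in> BQ m n \<and> h < m \<and> \<gamma> \<in> carrier \<Gamma>}"

definition tens_free :: "nat \<Rightarrow> nat \<Rightarrow> (((nat list \<Rightarrow>\<^sub>0 rat) \<times> 'a) \<Rightarrow>\<^sub>0 int) monoid" where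
  "tens_free m n = free_Abelian_group (BQ m n \<times> UNIV)"

definition tens_sub :: "nat \<Rightarrow> ('g,'b) monoid_scheme \<Rightarrow> ('g \<Rightarrow> nat \<Rightarrow> nat)
    \<Rightarrow> (nat \<Rightarrow> 'a::ab_group_add \<Rightarrow> 'a) \<Rightarrow> ('g \<Rightarrow> 'a \<Rightarrow> 'a) \<Rightarrow> nat
    \<Rightarrow> (((nat list \<Rightarrow>\<^sub>0 rat) \<times> 'a) \<Rightarrow>\<^sub>0 int) set" where
  "tens_sub m \<Gamma> \<phi> \<rho> \<sigma> n = generate (tens_free m n) (tens_rel m \<Gamma> \<phi> \<rho> \<sigma> n)"

definition chainC where
  "chainC m \<Gamma> \<phi> \<rho> \<sigma> n = tens_free m n Mod tens_sub m \<Gamma> \<phi> \<rho> \<sigma> n"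

definition induced :: "(('c \<Rightarrow>\<^sub>0 int) \<Rightarrow> ('d \<Rightarrow>\<^sub>0 int)) \<Rightarrow> ('d \<Rightarrow>\<^sub>0 int) set
     \<Rightarrow> ('c \<Rightarrow>\<^sub>0 int) set \<Rightarrow> ('d \<Rightarrow>\<^sub>0 int) set" where
  "induced f R Q = {y. \<exists>c\<in>Q. \<exists>r\<in>R. y = f c + r}"

definition tens_map :: "(nat list \<Rightarrow> (nat list \<Rightarrow>\<^sub>0 rat))
    \<Rightarrow> (((nat list \<Rightarrow>\<^sub>0 rat) \<times> 'a) \<Rightarrow>\<^sub>0 int) \<Rightarrow> (((nat list \<Rightarrow>\<^sub>0 rat) \<times> 'a) \<Rightarrow>\<^sub>0 int)" where
  "tens_map f = frag_extend (\<lambda>(x, a). frag_of (qlin f x, a))"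

definition bdry where
  "bdry m \<Gamma> \<phi> \<rho> \<sigma> n = induced (tens_map (bar_d m)) (tens_sub m \<Gamma> \<phi> \<rho> \<sigma> (n - 1))"

definition QHGamma where
  "QHGamma m \<Gamma> \<phi> \<rho> \<sigma> k =
     (chainC m \<Gamma> \<phi> \<rho> \<sigma> k)\<lparr>carrier :=
        {Y \<in> carrier (chainC m \<Gamma> \<phi> \<rho> \<sigma> k).
           bdry m \<Gamma> \<phi> \<rho> \<sigma> k Y = \<one>\<^bsub>chainC m \<Gamma> \<phi> \<rho> \<sigma> (k - 1)\<^esub>}\<rparr>
     Mod (bdry m \<Gamma> \<phi> \<rho> \<sigma> (k + 1) ` carrier (chainC m \<Gamma> \<phi> \<rho> \<sigma> (k + 1)))"

text \<open>Q(Z_m) = B_0 (x) Q (basis [g]); V = C_0.\<close>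
definition Vsp where "Vsp m \<Gamma> \<phi> \<rho> \<sigma> = chainC m \<Gamma> \<phi> \<rho> \<sigma> 0"

definition mulD :: "nat \<Rightarrow> nat list \<Rightarrow> (nat list \<Rightarrow>\<^sub>0 rat)" where
  "mulD m l = (\<Sum>k\<in>{1..<m}. Poly_Mapping.single [(hd l + k) mod m] 1)
              - Poly_Mapping.single [hd l] (of_nat (m - 1))"

definition mulN :: "nat \<Rightarrow> nat list \<Rightarrow> (nat list \<Rightarrow>\<^sub>0 rat)" where
  "mulN m l = (\<Sum>k\<in>{0..<m}. Poly_Mapping.single [(hd l + k) mod m] 1)"

definition Dstar where
  "Dstar m \<Gamma> \<phi> \<rho> \<sigma> = induced (tens_map (mulD m)) (tens_sub m \<Gamma> \<phi> \<rho> \<sigma> 0)"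

definition Nstar where
  "Nstar m \<Gamma> \<phi> \<rho> \<sigma> = induced (tens_map (mulN m)) (tens_sub m \<Gamma> \<phi> \<rho> \<sigma> 0)"

definition ker_mod_im where
  "ker_mod_im V f g = V\<lparr>carrier := {Y \<in> carrier V. f Y = \<one>\<^bsub>V\<^esub>}\<rparr> Mod (g ` carrier V)"

end

theory Submission
  imports Defs
begin


lemma lookup_qscale [simp]: "Poly_Mapping.lookup (qscale c p) k = c * Poly_Mapping.lookup p k"
  by (simp add: qscale_def Poly_Mapping.map.rep_eq when_def)

lemma qscale_add: "qscale c (p + r) = qscale c p + qscale c r"
  by (rule poly_mapping_eqI) (simp add: lookup_add algebra_simps)
lemma qscale_diff: "qscale c (p - r) = qscale c p - qscale c r"
  by (rule poly_mapping_eqI) (simp add: lookup_minus algebra_simps)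
lemma qscale_uminus: "qscale c (- p) = - qscale c p"
  by (rule poly_mapping_eqI) (simp)
lemma qscale_distrib: "qscale (a + b) p = qscale a p + qscale b p"
  by (rule poly_mapping_eqI) (simp add: lookup_add algebra_simps)
lemma qscale_zero [simp]: "qscale 0 p = 0" "qscale c 0 = 0"
  by (rule poly_mapping_eqI, simp)+
lemma qscale_one [simp]: "qscale 1 p = p"
  by (rule poly_mapping_eqI, simp)
lemma qscale_qscale [simp]: "qscale a (qscale b p) = qscale (a*b) p"
  by (rule poly_mapping_eqI, simp)
lemma qscale_single [simp]: "qscale c (Poly_Mapping.single l d) = Poly_Mapping.single l (c*d)"
  by (rule poly_mapping_eqI) (simp add: lookup_single when_def)
lemma qscale_sum: "qscale c (sum f A) = (\<Sum>a\<in>A. qscale c (f a))"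
  by (induction A rule: infinite_finite_induct) (auto simp: qscale_add)
lemma qscale_neg: "qscale (- c) p = - qscale c p"
  by (rule poly_mapping_eqI, simp)
lemma keys_qscale: "Poly_Mapping.keys (qscale c p) \<subseteq> Poly_Mapping.keys p"
  by (auto simp: in_keys_iff)

lemma qlin_superset:
  assumes "finite S" "Poly_Mapping.keys x \<subseteq> S"
  shows "qlin f x = (\<Sum>l\<in>S. qscale (Poly_Mapping.lookup x l) (f l))"
  unfolding qlin_def
  by (rule sum.mono_neutral_left) (use assms in \<open>auto simp: in_keys_iff\<close>)

lemma qlin_add: "qlin f (x + y) = qlin f x + qlin f y"
proof -
  let ?S = "Poly_Mapping.keys x \<union> Poly_Mapping.keys y"
  have "qlin f (x+y) = (\<Sum>l\<in>?S. qscale (Poly_Mapping.lookup (x+y) l) (f l))"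
    by (rule qlin_superset) (auto simp: keys_add)
  also have "\<dots> = (\<Sum>l\<in>?S. qscale (Poly_Mapping.lookup x l) (f l)) + (\<Sum>l\<in>?S. qscale (Poly_Mapping.lookup y l) (f l))"
    by (simp add: lookup_add qscale_distrib sum.distrib)
  also have "\<dots> = qlin f x + qlin f y"
    by (simp add: qlin_superset[of ?S x f] qlin_superset[of ?S y f])
  finally show ?thesis .
qed

lemma qlin_zero [simp]: "qlin f 0 = 0"
  by (simp add: qlin_def)

lemma qlin_uminus: "qlin f (- x) = - qlin f x"
  by (metis add_eq_0_iff2 qlin_add qlin_zero add.inverse_unique add.commute)

lemma qlin_diff: "qlin f (x - y) = qlin f x - qlin f y"
  by (metis diff_conv_add_uminus qlin_add qlin_uminus)

lemma qlin_sum: "qlin f (sum g A) = (\<Sum>a\<in>A. qlin f (g a))"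
  by (induction A rule: infinite_finite_induct) (auto simp: qlin_add)

lemma qlin_single [simp]: "qlin f (Poly_Mapping.single l c) = qscale c (f l)"
proof -
  have "qlin f (Poly_Mapping.single l c) = (\<Sum>l'\<in>{l}. qscale (Poly_Mapping.lookup (Poly_Mapping.single l c) l') (f l'))"
    by (rule qlin_superset) auto
  then show ?thesis by simp
qed

lemma qlin_qscale: "qlin f (qscale c x) = qscale c (qlin f x)"
proof -
  have "qlin f (qscale c x) = (\<Sum>l\<in>Poly_Mapping.keys x. qscale (Poly_Mapping.lookup (qscale c x) l) (f l))"
    by (rule qlin_superset) (auto simp: keys_qscale)
  then show ?thesis by (simp add: qlin_def qscale_sum)
qed

lemma qlin_cong: "(\<And>l. l \<in> Poly_Mapping.keys x \<Longrightarrow> f l = g l) \<Longrightarrow> qlin f x = qlin g x"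
  by (simp add: qlin_def)

lemma qlin_fun_add: "qlin (\<lambda>l. f l + g l) x = qlin f x + qlin g x"
  by (simp add: qlin_def qscale_add sum.distrib)

lemma qlin_fun_uminus: "qlin (\<lambda>l. - f l) x = - qlin f x"
  by (simp add: qlin_def qscale_uminus sum_negf)

lemma qlin_fun_qscale: "qlin (\<lambda>l. qscale c (f l)) x = qscale c (qlin f x)"
  by (simp add: qlin_def qscale_sum mult.commute)

lemma qlin_compose: "qlin g (qlin f x) = qlin (\<lambda>l. qlin g (f l)) x"
proof -
  have "qlin g (qlin f x) = (\<Sum>l\<in>Poly_Mapping.keys x. qlin g (qscale (Poly_Mapping.lookup x l) (f l)))"
    by (subst qlin_def[of f]) (rule qlin_sum)
  then show ?thesis by (simp add: qlin_qscale qlin_def[of "\<lambda>l. qlin g (f l)"])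
qed

lemma qlin_id: "qlin (\<lambda>l. Poly_Mapping.single l 1) x = x"
proof (rule poly_mapping_eqI)
  fix k
  show "Poly_Mapping.lookup (qlin (\<lambda>l. Poly_Mapping.single l 1) x) k = Poly_Mapping.lookup x k"
    by (simp add: qlin_def lookup_sum lookup_single when_def in_keys_iff)
qed

lemma keys_qlin: "Poly_Mapping.keys (qlin f x) \<subseteq> (\<Union>l\<in>Poly_Mapping.keys x. Poly_Mapping.keys (f l))"
  unfolding qlin_def using keys_sum keys_qscale by fastforce




definition asub :: "('x \<Rightarrow>\<^sub>0 int) set \<Rightarrow> bool" where
  "asub H \<longleftrightarrow> 0 \<in> H \<and> (\<forall>x\<in>H. \<forall>y\<in>H. x - y \<in> H)"

lemma asub_zero: "asub H \<Longrightarrow> 0 \<in> H" by (simp add: asub_def)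
lemma asub_diff: "asub H \<Longrightarrow> x \<in> H \<Longrightarrow> y \<in> H \<Longrightarrow> x - y \<in> H" by (simp add: asub_def)
lemma asub_uminus: "asub H \<Longrightarrow> x \<in> H \<Longrightarrow> - x \<in> H"
  by (metis asub_def diff_0)
lemma asub_add: "asub H \<Longrightarrow> x \<in> H \<Longrightarrow> y \<in> H \<Longrightarrow> x + y \<in> H"
  by (metis asub_diff asub_uminus diff_minus_eq_add)

lemma r_coset_free: "H #>\<^bsub>free_Abelian_group S\<^esub> c = (\<lambda>h. h + c) ` H"
  by (auto simp: r_coset_def)

lemma set_mult_free: "U <#>\<^bsub>free_Abelian_group S\<^esub> W = {x + y | x y. x \<in> U \<and> y \<in> W}"
  by (auto simp: set_mult_def)

lemma rc_eq_iff:
  assumes "asub H"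
  shows "(\<lambda>h. h + a) ` H = (\<lambda>h. h + b) ` H \<longleftrightarrow> a - b \<in> H"
proof
  assume "(\<lambda>h. h + a) ` H = (\<lambda>h. h + b) ` H"
  then have "0 + a \<in> (\<lambda>h. h + b) ` H" using asub_zero[OF assms] by blast
  then obtain h where "h \<in> H" "a = h + b" by auto
  then show "a - b \<in> H" by simp
next
  assume ab: "a - b \<in> H"
  show "(\<lambda>h. h + a) ` H = (\<lambda>h. h + b) ` H"
  proof (intro equalityI subsetI)
    fix x assume "x \<in> (\<lambda>h. h + a) ` H"
    then obtain h where h: "h \<in> H" "x = h + a" by auto
    then have "h + (a - b) \<in> H" using asub_add[OF assms h(1) ab] by simp
    moreover have "x = (h + (a - b)) + b" using h by simp
    ultimately show "x \<in> (\<lambda>h. h + b) ` H" by blast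
  next
    fix x assume "x \<in> (\<lambda>h. h + b) ` H"
    then obtain h where h: "h \<in> H" "x = h + b" by auto
    then have "h - (a - b) \<in> H" using asub_diff[OF assms h(1) ab] by simp
    moreover have "x = (h - (a - b)) + a" using h by simp
    ultimately show "x \<in> (\<lambda>h. h + a) ` H" by blast
  qed
qed

lemma rc_mult:
  assumes "asub H"
  shows "{x + y | x y. x \<in> (\<lambda>h. h + a) ` H \<and> y \<in> (\<lambda>h. h + b) ` H} = (\<lambda>h. h + (a + b)) ` H"
proof (intro equalityI subsetI)
  fix z assume "z \<in> {x + y | x y. x \<in> (\<lambda>h. h + a) ` H \<and> y \<in> (\<lambda>h. h + b) ` H}"
  then obtain h1 h2 where "h1 \<in> H" "h2 \<in> H" "z = (h1 + a) + (h2 + b)" by blast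
  then show "z \<in> (\<lambda>h. h + (a + b)) ` H"
    using asub_add[OF assms] by (auto intro!: image_eqI[where x="h1+h2"] simp: algebra_simps)
next
  fix z assume "z \<in> (\<lambda>h. h + (a + b)) ` H"
  then obtain h where "h \<in> H" "z = (h + a) + (0 + b)" by (auto simp: algebra_simps)
  then show "z \<in> {x + y | x y. x \<in> (\<lambda>h. h + a) ` H \<and> y \<in> (\<lambda>h. h + b) ` H}"
    using asub_zero[OF assms] by blast
qed

lemma induced_rc:
  assumes "asub R" "0 \<in> H" "\<And>x y. f (x + y) = f x + f y" "f ` H \<subseteq> R"
  shows "induced f R ((\<lambda>h. h + c) ` H) = (\<lambda>r. r + f c) ` R"
proof (intro equalityI subsetI)
  fix y assume "y \<in> induced f R ((\<lambda>h. h + c) ` H)"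
  then obtain h r where hr: "h \<in> H" "r \<in> R" "y = f (h + c) + r" by (auto simp: induced_def)
  then have "y = (f h + r) + f c" by (simp add: assms(3) algebra_simps)
  moreover have "f h + r \<in> R" using hr assms(4) asub_add[OF assms(1)] by blast
  ultimately show "y \<in> (\<lambda>r. r + f c) ` R" by blast
next
  fix y assume "y \<in> (\<lambda>r. r + f c) ` R"
  then obtain r where "r \<in> R" "y = f (0 + c) + r" by (auto simp: algebra_simps)
  then show "y \<in> induced f R ((\<lambda>h. h + c) ` H)"
    unfolding induced_def using assms(2) by blast
qed




locale zsetup =
  fixes m :: nat and \<Gamma> :: "('g, 'b) monoid_scheme" and \<phi> :: "'g \<Rightarrow> nat \<Rightarrow> nat"
    and \<rho> :: "nat \<Rightarrow> 'a::ab_group_add \<Rightarrow> 'a" and \<sigma> :: "'g \<Rightarrow> 'a \<Rightarrow> 'a"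
  assumes m2: "m \<ge> 2" and grp: "group \<Gamma>" and act: "zm_aut_action m \<Gamma> \<phi>"
begin

abbreviation "F n \<equiv> tens_free m n :: (((nat list \<Rightarrow>\<^sub>0 rat) \<times> 'a) \<Rightarrow>\<^sub>0 int) monoid"
abbreviation "H n \<equiv> tens_sub m \<Gamma> \<phi> \<rho> \<sigma> n"
abbreviation "R n \<equiv> tens_rel m \<Gamma> \<phi> \<rho> \<sigma> n"

lemma m_pos: "m > 0" using m2 by simp

lemma phi_lt: "\<gamma> \<in> carrier \<Gamma> \<Longrightarrow> g < m \<Longrightarrow> \<phi> \<gamma> g < m"
  using act unfolding zm_aut_action_def bij_betw_def by auto

lemma phi_add: "\<gamma> \<in> carrier \<Gamma> \<Longrightarrow> g < m \<Longrightarrow> h < m \<Longrightarrow> \<phi> \<gamma> ((g + h) mod m) = (\<phi> \<gamma> g + \<phi> \<gamma> h) mod m"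
  using act unfolding zm_aut_action_def by auto

lemma phi_bij: "\<gamma> \<in> carrier \<Gamma> \<Longrightarrow> bij_betw (\<phi> \<gamma>) {..<m} {..<m}"
  using act unfolding zm_aut_action_def by auto

lemma sd_list_basis:
  assumes "l \<in> bar_basis m n" "\<gamma> \<in> carrier \<Gamma>"
  shows "sd_list m \<phi> h \<gamma> l \<in> bar_basis m n"
proof -
  from assms(1) have l: "length l = n + 1" "set l \<subseteq> {..<m}" by (auto simp: bar_basis_def)
  then obtain g gs where lg: "l = g # gs" by (cases l) auto
  have "set (map (\<phi> \<gamma>) gs) \<subseteq> {..<m}" using l lg phi_lt[OF assms(2)] by auto
  then show ?thesis using l lg m_pos by (auto simp: bar_basis_def sd_list_def)
qed

lemma sd_act_single: "sd_act m \<phi> h \<gamma> (Poly_Mapping.single l c) = Poly_Mapping.single (sd_list m \<phi> h \<gamma> l) c"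
  by (simp add: sd_act_def)

lemma BQ_qlin:
  assumes "x \<in> BQ m k" "\<And>l. l \<in> bar_basis m k \<Longrightarrow> f l \<in> BQ m j"
  shows "qlin f x \<in> BQ m j"
  using keys_qlin[of f x] assms by (auto simp: BQ_def)

lemma sd_act_BQ: "x \<in> BQ m n \<Longrightarrow> \<gamma> \<in> carrier \<Gamma> \<Longrightarrow> sd_act m \<phi> h \<gamma> x \<in> BQ m n"
  unfolding sd_act_def by (rule BQ_qlin) (auto simp: BQ_def sd_list_basis)

lemma inv_carrier: "\<gamma> \<in> carrier \<Gamma> \<Longrightarrow> inv\<^bsub>\<Gamma>\<^esub> \<gamma> \<in> carrier \<Gamma>"
  using grp by (simp add: group.inv_closed)

lemma sd_act_inv_BQ: "x \<in> BQ m n \<Longrightarrow> \<gamma> \<in> carrier \<Gamma> \<Longrightarrow> sd_act_inv m \<Gamma> \<phi> h \<gamma> x \<in> BQ m n"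
  unfolding sd_act_inv_def by (rule sd_act_BQ) (auto simp: inv_carrier)

lemma BQ_add: "x \<in> BQ m n \<Longrightarrow> y \<in> BQ m n \<Longrightarrow> x + y \<in> BQ m n"
  using keys_add[of x y] by (auto simp: BQ_def)

lemma R_carrier: "R n \<subseteq> carrier (F n)"
  unfolding tens_rel_def tens_free_def
  using keys_diff keys_add
  by (auto simp: BQ_add sd_act_inv_BQ dest!: subsetD[OF keys_diff] subsetD[OF keys_add])

lemma F_group: "group (F n)" by (simp add: tens_free_def)

lemma H_subgroup: "subgroup (H n) (F n)"
  unfolding tens_sub_def by (rule group.generate_is_subgroup[OF F_group R_carrier])

lemma H_carrier: "H n \<subseteq> carrier (F n)"
  using H_subgroup subgroup.subset by blast

lemma R_H: "R n \<subseteq> H n"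
  unfolding tens_sub_def by (auto intro: generate.incl)

lemma asub_H: "asub (H n)"
proof -
  have s: "subgroup (H n) (F n)" by (rule H_subgroup)
  have "0 \<in> H n" using subgroup.one_closed[OF s] by (simp add: tens_free_def)
  moreover have "x - y \<in> H n" if "x \<in> H n" "y \<in> H n" for x y
  proof -
    have "inv\<^bsub>F n\<^esub> y \<in> H n" using subgroup.m_inv_closed[OF s that(2)] .
    moreover have "y \<in> carrier (F n)" using H_carrier that(2) by blast
    then have "Poly_Mapping.keys y \<subseteq> BQ m n \<times> UNIV" by (simp add: tens_free_def)
    then have "inv\<^bsub>F n\<^esub> y = - y" by (simp add: tens_free_def)
    ultimately have "- y \<in> H n" by simp
    then have "x \<otimes>\<^bsub>F n\<^esub> (- y) \<in> H n" using subgroup.m_closed[OF s that(1)] by blast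
    then show ?thesis by (simp add: tens_free_def)
  qed
  ultimately show ?thesis by (simp add: asub_def)
qed

lemma H_min:
  assumes "asub K" "R n \<subseteq> K"
  shows "H n \<subseteq> K"
proof
  fix x assume "x \<in> H n"
  then show "x \<in> K" unfolding tens_sub_def
  proof (induction rule: generate.induct)
    case one then show ?case using asub_zero[OF assms(1)] by (simp add: tens_free_def)
  next
    case (incl h) then show ?case using assms(2) by blast
  next
    case (inv h)
    then have "h \<in> carrier (F n)" using R_carrier by blast
    then have "Poly_Mapping.keys h \<subseteq> BQ m n \<times> UNIV" by (simp add: tens_free_def)
    then have "inv\<^bsub>F n\<^esub> h = - h" by (simp add: tens_free_def)
    then show ?case using inv assms asub_uminus by auto
  next
    case (eng h1 h2) then show ?case using asub_add[OF assms(1)] by (simp add: tens_free_def)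
  qed
qed

lemma tens_map_add: "tens_map f (x + y) = tens_map f x + tens_map f y"
  by (simp add: tens_map_def frag_extend_add)
lemma tens_map_diff: "tens_map f (x - y) = tens_map f x - tens_map f y"
  by (simp add: tens_map_def frag_extend_diff)
lemma tens_map_zero [simp]: "tens_map f 0 = 0"
  by (simp add: tens_map_def)
lemma tens_map_of [simp]: "tens_map f (frag_of (x, a)) = frag_of (qlin f x, a)"
  by (simp add: tens_map_def)

definition good :: "nat \<Rightarrow> nat \<Rightarrow> (nat list \<Rightarrow> (nat list \<Rightarrow>\<^sub>0 rat)) \<Rightarrow> bool" where
  "good k j f \<longleftrightarrow> (\<forall>l\<in>bar_basis m k. f l \<in> BQ m j)"

lemma tens_map_carrier:
  assumes "good k j f" "c \<in> carrier (F k)"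
  shows "tens_map f c \<in> carrier (F j)"
proof -
  have "Poly_Mapping.keys (tens_map f c) \<subseteq> BQ m j \<times> UNIV"
  proof
    fix z assume "z \<in> Poly_Mapping.keys (tens_map f c)"
    then obtain x a where "(x, a) \<in> Poly_Mapping.keys c" "z \<in> Poly_Mapping.keys (frag_of (qlin f x, a))"
      using keys_frag_extend[of "\<lambda>(x, a). frag_of (qlin f x, a)" c] unfolding tens_map_def by auto
    moreover have "x \<in> BQ m k" using calculation(1) assms(2) by (auto simp: tens_free_def)
    ultimately show "z \<in> BQ m j \<times> UNIV" using BQ_qlin assms(1) by (auto simp: good_def)
  qed
  then show ?thesis by (simp add: tens_free_def)
qed

lemma tens_map_compose: "tens_map g (tens_map f c) = tens_map (\<lambda>l. qlin g (f l)) c"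
proof -
  have "tens_map f c = frag_extend (frag_of \<circ> (\<lambda>(x, a). (qlin f x, a))) c"
    unfolding tens_map_def by (rule frag_extend_eq) auto
  then have "tens_map g (tens_map f c) = frag_extend ((\<lambda>(x, a). frag_of (qlin g x, a)) \<circ> (\<lambda>(x, a). (qlin f x, a))) c"
    unfolding tens_map_def[of g] by (simp add: frag_extend_compose)
  also have "\<dots> = tens_map (\<lambda>l. qlin g (f l)) c"
    unfolding tens_map_def by (rule frag_extend_eq) (auto simp: qlin_compose)
  finally show ?thesis .
qed

lemma tens_map_cong:
  assumes "c \<in> carrier (F k)" "\<And>l. l \<in> bar_basis m k \<Longrightarrow> f l = g l"
  shows "tens_map f c = tens_map g c"
  unfolding tens_map_def
proof (rule frag_extend_eq)
  fix z assume z: "z \<in> Poly_Mapping.keys c"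
  obtain x a where xa: "z = (x, a)" by (cases z)
  have "x \<in> BQ m k" using z xa assms(1) by (auto simp: tens_free_def)
  then have "qlin f x = qlin g x" using assms(2) by (intro qlin_cong) (auto simp: BQ_def)
  then show "(\<lambda>(x, a). frag_of (qlin f x, a)) z = (\<lambda>(x, a). frag_of (qlin g x, a)) z" using xa by simp
qed

lemma tens_map_id: "tens_map (\<lambda>l. Poly_Mapping.single l 1) c = c"
proof -
  have "tens_map (\<lambda>l. Poly_Mapping.single l 1) c = frag_extend frag_of c"
    unfolding tens_map_def by (rule frag_extend_eq) (auto simp: qlin_id)
  then show ?thesis by (metis frag_expansion)
qed

lemma tens_map_fun_add:
  assumes "good k j f" "good k j g" "c \<in> carrier (F k)"
  shows "tens_map (\<lambda>l. f l + g l) c - (tens_map f c + tens_map g c) \<in> H j"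
  using assms(3) unfolding tens_free_def carrier_free_Abelian_group_iff
proof (induction c rule: frag_induction)
  case zero then show ?case using asub_zero[OF asub_H] by simp
next
  case (one z)
  obtain x a where xa: "z = (x, a)" by (cases z)
  have x: "x \<in> BQ m k" using one xa by auto
  have "qlin f x \<in> BQ m j" "qlin g x \<in> BQ m j" using BQ_qlin x assms(1,2) by (auto simp: good_def)
  then have "frag_of (qlin f x + qlin g x, a) - frag_of (qlin f x, a) - frag_of (qlin g x, a) \<in> R j"
    unfolding tens_rel_def by blast
  then show ?case using R_H xa by (auto simp: qlin_fun_add algebra_simps)
next
  case (diff a b)
  have "tens_map (\<lambda>l. f l + g l) (a - b) - (tens_map f (a - b) + tens_map g (a - b))
     = (tens_map (\<lambda>l. f l + g l) a - (tens_map f a + tens_map g a))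
       - (tens_map (\<lambda>l. f l + g l) b - (tens_map f b + tens_map g b))"
    by (simp add: tens_map_diff algebra_simps)
  then show ?case using diff asub_diff[OF asub_H] by simp
qed

lemma tens_map_fun_zero:
  assumes "c \<in> carrier (F k)"
  shows "tens_map (\<lambda>l. 0) c \<in> H j"
  using assms unfolding tens_free_def carrier_free_Abelian_group_iff
proof (induction c rule: frag_induction)
  case zero then show ?case using asub_zero[OF asub_H] by simp
next
  case (one z)
  obtain x a where xa: "z = (x, a)" by (cases z)
  have "(0::nat list \<Rightarrow>\<^sub>0 rat) \<in> BQ m j" by (simp add: BQ_def)
  then have "frag_of (0 + 0, a) - frag_of (0, a) - frag_of (0, a) \<in> R j"
    unfolding tens_rel_def by blast
  then have "- frag_of (0, a) \<in> H j" using R_H by auto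
  then have "frag_of (0, a) \<in> H j" using asub_uminus[OF asub_H] by fastforce
  then show ?case using xa by (simp add: qlin_def)
next
  case (diff a b)
  then show ?case using asub_diff[OF asub_H] by (simp add: tens_map_diff)
qed

definition eqv :: "nat \<Rightarrow> (nat list \<Rightarrow> (nat list \<Rightarrow>\<^sub>0 rat)) \<Rightarrow> bool" where
  "eqv k f \<longleftrightarrow> (\<forall>l\<in>bar_basis m k. \<forall>h \<gamma>. h < m \<longrightarrow> \<gamma> \<in> carrier \<Gamma> \<longrightarrow>
      f (sd_list m \<phi> h \<gamma> l) = sd_act m \<phi> h \<gamma> (f l))"

lemma qlin_equiv:
  assumes "eqv k f" "x \<in> BQ m k" "h < m" "\<gamma> \<in> carrier \<Gamma>"
  shows "qlin f (sd_act m \<phi> h \<gamma> x) = sd_act m \<phi> h \<gamma> (qlin f x)"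
proof -
  have "qlin f (sd_act m \<phi> h \<gamma> x) = qlin (\<lambda>l. f (sd_list m \<phi> h \<gamma> l)) x"
    unfolding sd_act_def by (simp add: qlin_compose)
  also have "\<dots> = qlin (\<lambda>l. sd_act m \<phi> h \<gamma> (f l)) x"
    using assms by (intro qlin_cong) (auto simp: eqv_def BQ_def)
  also have "\<dots> = sd_act m \<phi> h \<gamma> (qlin f x)"
    unfolding sd_act_def by (simp add: qlin_compose)
  finally show ?thesis .
qed

lemma tens_map_H:
  assumes "good k j f" "eqv k f"
  shows "tens_map f ` H k \<subseteq> H j"
proof -
  let ?K = "{c. tens_map f c \<in> H j}"
  have "asub ?K" unfolding asub_def using asub_zero[OF asub_H] asub_diff[OF asub_H]
    by (auto simp: tens_map_diff)
  moreover have "R k \<subseteq> ?K"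
  proof
    fix r assume "r \<in> R k"
    then consider (a) x y a where "x \<in> BQ m k" "y \<in> BQ m k" "r = frag_of (x + y, a) - frag_of (x, a) - frag_of (y, a)"
      | (b) x a b where "x \<in> BQ m k" "r = frag_of (x, a + b) - frag_of (x, a) - frag_of (x, b)"
      | (c) x h \<gamma> a where "x \<in> BQ m k" "h < m" "\<gamma> \<in> carrier \<Gamma>"
           "r = frag_of (sd_act_inv m \<Gamma> \<phi> h \<gamma> x, a) - frag_of (x, \<rho> h (\<sigma> \<gamma> a))"
      unfolding tens_rel_def by blast
    then show "r \<in> ?K"
    proof cases
      case a
      then have "qlin f x \<in> BQ m j" "qlin f y \<in> BQ m j" using BQ_qlin assms(1) by (auto simp: good_def)
      moreover have "tens_map f r = frag_of (qlin f x + qlin f y, a) - frag_of (qlin f x, a) - frag_of (qlin f y, a)"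
        using a by (simp add: tens_map_diff qlin_add)
      ultimately have "tens_map f r \<in> R j" unfolding tens_rel_def by blast
      then show ?thesis using R_H by auto
    next
      case b
      then have "qlin f x \<in> BQ m j" using BQ_qlin assms(1) by (auto simp: good_def)
      moreover have "tens_map f r = frag_of (qlin f x, a + b) - frag_of (qlin f x, a) - frag_of (qlin f x, b)"
        using b by (simp add: tens_map_diff)
      ultimately have "tens_map f r \<in> R j" unfolding tens_rel_def by blast
      then show ?thesis using R_H by auto
    next
      case c
      then have fx: "qlin f x \<in> BQ m j" using BQ_qlin assms(1) by (auto simp: good_def)
      have "\<phi> (inv\<^bsub>\<Gamma>\<^esub> \<gamma>) ((m - h) mod m) < m" using phi_lt inv_carrier c m_pos by auto
      then have "qlin f (sd_act_inv m \<Gamma> \<phi> h \<gamma> x) = sd_act_inv m \<Gamma> \<phi> h \<gamma> (qlin f x)"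
        unfolding sd_act_inv_def using c inv_carrier by (intro qlin_equiv[OF assms(2)]) auto
      then have "tens_map f r = frag_of (sd_act_inv m \<Gamma> \<phi> h \<gamma> (qlin f x), a) - frag_of (qlin f x, \<rho> h (\<sigma> \<gamma> a))"
        using c by (simp add: tens_map_diff)
      then have "tens_map f r \<in> R j" using c fx unfolding tens_rel_def by blast
      then show ?thesis using R_H by auto
    qed
  qed
  ultimately show ?thesis using H_min by blast
qed

end



definition sc :: "nat \<Rightarrow> nat list \<Rightarrow> (nat list \<Rightarrow>\<^sub>0 rat)" where
  "sc m l = (\<Sum>j<m. Poly_Mapping.single (j # ((hd l + m - j) mod m) # tl l) (1 / of_nat m))"

definition sq :: "rat \<Rightarrow> nat list \<Rightarrow> (nat list \<Rightarrow>\<^sub>0 rat)" where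
  "sq q l = Poly_Mapping.single l q"

lemma modsub: "y < m \<Longrightarrow> (z::nat) < m \<Longrightarrow> (z + y) mod m = x \<Longrightarrow> z = (x + m - y) mod m"
  using mod_less mod_if nat_add_left_cancel_less add_diff_inverse_nat less_imp_diff_less by fastforce

lemma modsub2: "j < m \<Longrightarrow> (g::nat) < m \<Longrightarrow> ((g + m - j) mod m + b) mod m = ((g + b) mod m + m - j) mod m"
  by (smt (verit, del_insts) add.assoc add.commute add_diff_cancel_left'
    add_diff_inverse_nat mod_add_right_eq order_less_imp_not_less)

lemma modsub3: "j < m \<Longrightarrow> (g::nat) < m \<Longrightarrow> (j + (g + m - j) mod m) mod m = g"
  by (metis mod_less mod_add_right_eq add_diff_inverse_nat mod_add_self1 add.commute order_less_imp_not_less trans_less_add1)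

lemma modinj: "(h + x) mod m = (h + y) mod (m::nat) \<Longrightarrow> x < m \<Longrightarrow> y < m \<Longrightarrow> x = y"
proof (induction x y rule: linorder_wlog)
  case (le a b)
  then have "m dvd (h + b) - (h + a)" using mod_eq_dvd_iff_nat[of "h+a" "h+b" m] by simp
  then have "m dvd b - a" by simp
  then show ?case using le by (metis diff_is_0_eq dvd_imp_le le_antisym less_imp_diff_less less_le_not_le le_refl zero_less_diff)
qed (metis)

lemma shift_bij: "(m::nat) > 0 \<Longrightarrow> bij_betw (\<lambda>k. (h + k) mod m) {..<m} {..<m}"
proof -
  assume m: "m > 0"
  have inj: "inj_on (\<lambda>k. (h + k) mod m) {..<m}"
  proof (rule inj_onI)
    fix x y assume "x \<in> {..<m}" "y \<in> {..<m}" "(h + x) mod m = (h + y) mod m"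
    then show "x = y" using modinj[of h x m y] by simp
  qed
  have "(\<lambda>k. (h + k) mod m) ` {..<m} \<subseteq> {..<m}" using m by auto
  then show ?thesis using inj by (simp add: bij_betw_def endo_inj_surj)
qed

lemma keys_single_sub: "Poly_Mapping.keys (Poly_Mapping.single l c) \<subseteq> {l}"
  by simp

context zsetup begin

lemma BQ_single: "l \<in> bar_basis m n \<Longrightarrow> Poly_Mapping.single l c \<in> BQ m n"
  by (auto simp: BQ_def)
lemma BQ_zero: "0 \<in> BQ m n" by (simp add: BQ_def)
lemma BQ_diff: "x \<in> BQ m n \<Longrightarrow> y \<in> BQ m n \<Longrightarrow> x - y \<in> BQ m n"
  using keys_diff[of x y] by (auto simp: BQ_def)
lemma BQ_sum: "(\<And>i. i \<in> I \<Longrightarrow> f i \<in> BQ m n) \<Longrightarrow> sum f I \<in> BQ m n"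
  using keys_sum[of f I] unfolding BQ_def by blast
lemma BQ_qscale: "x \<in> BQ m n \<Longrightarrow> qscale c x \<in> BQ m n"
  using keys_qscale[of c x] by (auto simp: BQ_def)

lemma sd_act_add: "sd_act m \<phi> h \<gamma> (x + y) = sd_act m \<phi> h \<gamma> x + sd_act m \<phi> h \<gamma> y"
  by (simp add: sd_act_def qlin_add)
lemma sd_act_diff: "sd_act m \<phi> h \<gamma> (x - y) = sd_act m \<phi> h \<gamma> x - sd_act m \<phi> h \<gamma> y"
  by (simp add: sd_act_def qlin_diff)
lemma sd_act_sum: "sd_act m \<phi> h \<gamma> (sum f I) = (\<Sum>i\<in>I. sd_act m \<phi> h \<gamma> (f i))"
  by (simp add: sd_act_def qlin_sum)

lemma perm_bij: "\<gamma> \<in> carrier \<Gamma> \<Longrightarrow> bij_betw (\<lambda>x. (h + \<phi> \<gamma> x) mod m) {..<m} {..<m}"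
  using bij_betw_trans[OF phi_bij shift_bij[OF m_pos]] by (simp add: comp_def)

lemma mulN_eq: "mulN m l = (\<Sum>x<m. Poly_Mapping.single [x] 1)"
  unfolding mulN_def atLeast0LessThan
  using sum.reindex_bij_betw[OF shift_bij[OF m_pos, of "hd l"], of "\<lambda>x. Poly_Mapping.single [x] 1"] by simp

lemma mulD_eq: "hd l < m \<Longrightarrow> mulD m l = mulN m l - Poly_Mapping.single [hd l] (of_nat m)"
proof -
  assume g: "hd l < m"
  let ?S = "(\<Sum>k\<in>{1..<m}. Poly_Mapping.single [(hd l + k) mod m] (1::rat))"
  have e: "{0..<m} = insert 0 {1..<m}" using m_pos by auto
  have "mulN m l = (\<Sum>k\<in>insert 0 {1..<m}. Poly_Mapping.single [(hd l + k) mod m] (1::rat))"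
    unfolding mulN_def by (simp only: e)
  also have "\<dots> = Poly_Mapping.single [(hd l + 0) mod m] 1 + ?S"
    by (rule sum.insert) auto
  also have "(hd l + 0) mod m = hd l" using g by simp
  finally have N: "mulN m l = Poly_Mapping.single [hd l] 1 + ?S" .
  have eq: "(of_nat m :: rat) = 1 + of_nat (m - 1)" using m_pos by (cases m) auto
  have s: "Poly_Mapping.single [hd l] (of_nat m :: rat) = Poly_Mapping.single [hd l] 1 + Poly_Mapping.single [hd l] (of_nat (m - 1))"
    by (metis single_add eq)
  show ?thesis unfolding mulD_def N s by (simp add: algebra_simps)
qed

lemma good_mulN: "good 0 0 (mulN m)"
  unfolding good_def mulN_eq using m_pos by (auto intro!: BQ_sum BQ_single simp: bar_basis_def)

lemma good_mulD: "good 0 0 (mulD m)"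
proof (unfold good_def, intro ballI)
  fix l assume l: "l \<in> bar_basis m 0"
  then obtain g where g: "l = [g]" "g < m" by (cases l) (auto simp: bar_basis_def)
  show "mulD m l \<in> BQ m 0" unfolding mulD_def g
    using m_pos g by (intro BQ_sum BQ_single BQ_diff) (auto simp: bar_basis_def)
qed

lemma sd_list_single: "sd_list m \<phi> h \<gamma> [x] = [(h + \<phi> \<gamma> x) mod m]"
  by (simp add: sd_list_def)

lemma sd_act_mulN: assumes g: "\<gamma> \<in> carrier \<Gamma>"
  shows "sd_act m \<phi> h \<gamma> (\<Sum>x<m. Poly_Mapping.single [x] 1) = (\<Sum>x<m. Poly_Mapping.single [x] 1)"
  unfolding sd_act_sum sd_act_single sd_list_single
  using sum.reindex_bij_betw[OF perm_bij[OF g, of h], of "\<lambda>y. Poly_Mapping.single [y] (1::rat)"] by simp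

lemma eqv_mulN: "eqv 0 (mulN m)"
  unfolding eqv_def mulN_eq using sd_act_mulN by simp

lemma eqv_mulD: "eqv 0 (mulD m)"
proof (unfold eqv_def, intro ballI allI impI)
  fix l h \<gamma> assume l: "l \<in> bar_basis m 0" and h: "h < m" and \<gamma>: "\<gamma> \<in> carrier \<Gamma>"
  then obtain g where g: "l = [g]" "g < m" by (cases l) (auto simp: bar_basis_def)
  have sl: "sd_list m \<phi> h \<gamma> l = [(h + \<phi> \<gamma> g) mod m]" using g by (simp add: sd_list_single)
  have "mulD m (sd_list m \<phi> h \<gamma> l) = mulN m (sd_list m \<phi> h \<gamma> l) - Poly_Mapping.single [(h + \<phi> \<gamma> g) mod m] (of_nat m)"
    using sl m_pos by (subst mulD_eq) auto
  also have "\<dots> = sd_act m \<phi> h \<gamma> (mulN m l) - sd_act m \<phi> h \<gamma> (Poly_Mapping.single [g] (of_nat m))"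
    using sd_act_mulN[OF \<gamma>] by (simp add: mulN_eq sd_act_single sd_list_single)
  also have "\<dots> = sd_act m \<phi> h \<gamma> (mulD m l)"
    using g by (simp add: mulD_eq sd_act_diff)
  finally show "mulD m (sd_list m \<phi> h \<gamma> l) = sd_act m \<phi> h \<gamma> (mulD m l)" .
qed

lemma eqv_sq: "eqv k (sq q)"
  unfolding eqv_def sq_def by (simp add: sd_act_single)

lemma good_sq: "good k k (sq q)"
  unfolding good_def sq_def by (simp add: BQ_single)

lemma good_sc: "good n (Suc n) (sc m)"
proof (unfold good_def, intro ballI)
  fix l assume l: "l \<in> bar_basis m n"
  then obtain g gs where g: "l = g # gs" "length gs = n" "g < m" "set gs \<subseteq> {..<m}"
    by (cases l) (auto simp: bar_basis_def)
  show "sc m l \<in> BQ m (Suc n)" unfolding sc_def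
    using g m_pos by (intro BQ_sum BQ_single) (auto simp: bar_basis_def)
qed

lemma eqv_sc: "eqv n (sc m)"
proof (unfold eqv_def, intro ballI allI impI)
  fix l h \<gamma> assume l: "l \<in> bar_basis m n" and h: "h < m" and \<gamma>: "\<gamma> \<in> carrier \<Gamma>"
  then obtain g gs where g: "l = g # gs" "g < m" "set gs \<subseteq> {..<m}"
    by (cases l) (auto simp: bar_basis_def)
  let ?g' = "(h + \<phi> \<gamma> g) mod m"
  let ?G = "\<lambda>y. Poly_Mapping.single (y # ((?g' + m - y) mod m) # map (\<phi> \<gamma>) gs) (1 / of_nat m :: rat)"
  have "sc m (sd_list m \<phi> h \<gamma> l) = (\<Sum>y<m. ?G y)"
    unfolding sc_def using g by (simp add: sd_list_def)
  also have "\<dots> = (\<Sum>j<m. ?G ((h + \<phi> \<gamma> j) mod m))"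
    using sum.reindex_bij_betw[OF perm_bij[OF \<gamma>, of h], of ?G] by simp
  also have "\<dots> = (\<Sum>j<m. Poly_Mapping.single (sd_list m \<phi> h \<gamma> (j # ((g + m - j) mod m) # gs)) (1 / of_nat m))"
  proof (rule sum.cong)
    fix j assume j: "j \<in> {..<m}"
    let ?a = "(g + m - j) mod m"
    have a: "?a < m" using m_pos by simp
    have "\<phi> \<gamma> ((?a + j) mod m) = (\<phi> \<gamma> ?a + \<phi> \<gamma> j) mod m"
      using phi_add[OF \<gamma> a] j by simp
    moreover have "(?a + j) mod m = g" using modsub3[of j m g] j g by (simp add: add.commute)
    ultimately have e1: "(\<phi> \<gamma> ?a + \<phi> \<gamma> j) mod m = \<phi> \<gamma> g" by simp
    have "(\<phi> \<gamma> ?a + (h + \<phi> \<gamma> j) mod m) mod m = (h + (\<phi> \<gamma> ?a + \<phi> \<gamma> j) mod m) mod m"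
      by (simp add: mod_add_right_eq mod_add_left_eq add.left_commute)
    also have "\<dots> = ?g'" using e1 by simp
    finally have "\<phi> \<gamma> ?a = (?g' + m - (h + \<phi> \<gamma> j) mod m) mod m"
      using modsub[of "(h + \<phi> \<gamma> j) mod m" m "\<phi> \<gamma> ?a" ?g'] phi_lt[OF \<gamma> a] m_pos by simp
    then show "?G ((h + \<phi> \<gamma> j) mod m) = Poly_Mapping.single (sd_list m \<phi> h \<gamma> (j # ?a # gs)) (1 / of_nat m)"
      by (simp add: sd_list_def)
  qed simp
  also have "\<dots> = sd_act m \<phi> h \<gamma> (sc m l)"
    unfolding sc_def sd_act_sum sd_act_single using g by simp
  finally show "sc m (sd_list m \<phi> h \<gamma> l) = sd_act m \<phi> h \<gamma> (sc m l)" .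
qed

end



definition mrg :: "nat \<Rightarrow> nat list \<Rightarrow> nat \<Rightarrow> nat list" where
  "mrg m gs i = take (i - 1) gs @ [(gs ! (i - 1) + gs ! i) mod m] @ drop (i + 1) gs"

lemma bar_d_cons: "bar_d m (g # gs) = Poly_Mapping.single (((g + hd gs) mod m) # tl gs) 1
   + (\<Sum>i\<in>{1..<length gs}. Poly_Mapping.single (g # mrg m gs i) ((-1) ^ i))
   + Poly_Mapping.single (g # butlast gs) ((-1) ^ length gs)"
  by (simp add: bar_d_def mrg_def Let_def)

lemma length_mrg: "1 \<le> i \<Longrightarrow> i < length gs \<Longrightarrow> length (mrg m gs i) = length gs - 1"
  by (simp add: mrg_def)

lemma set_mrg: "m > 0 \<Longrightarrow> set gs \<subseteq> {..<m} \<Longrightarrow> set (mrg m gs i) \<subseteq> {..<m}"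
  unfolding mrg_def using set_take_subset[of "i - 1" gs] set_drop_subset[of "i + 1" gs] by auto

lemma mrg_Cons1: "gs \<noteq> [] \<Longrightarrow> mrg m (x # gs) 1 = ((x + hd gs) mod m) # tl gs"
  by (cases gs) (simp_all add: mrg_def)

lemma mrg_Cons: "2 \<le> i \<Longrightarrow> mrg m (x # gs) i = x # mrg m gs (i - 1)"
proof -
  assume "2 \<le> i"
  then obtain p where "i = Suc (Suc p)" by (metis add_2_eq_Suc le_Suc_ex)
  then show ?thesis by (simp add: mrg_def)
qed

context zsetup begin

lemma map_mrg:
  assumes "1 \<le> i" "i < length gs" "set gs \<subseteq> {..<m}" "\<gamma> \<in> carrier \<Gamma>"
  shows "map (\<phi> \<gamma>) (mrg m gs i) = mrg m (map (\<phi> \<gamma>) gs) i"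
proof -
  have "gs ! (i - 1) \<in> set gs" "gs ! i \<in> set gs" using assms(1,2) by auto
  then have "gs ! (i - 1) < m" "gs ! i < m" using assms(3) by auto
  then show ?thesis using assms
    by (simp add: mrg_def take_map drop_map phi_add)
qed

lemma good_bar_d: "good (Suc n) n (bar_d m)"
proof (unfold good_def, intro ballI)
  fix l assume l: "l \<in> bar_basis m (Suc n)"
  then obtain g gs where g: "l = g # gs" "length gs = Suc n" "g < m" "set gs \<subseteq> {..<m}"
    by (cases l) (auto simp: bar_basis_def)
  have hs: "hd gs < m" "\<forall>x\<in>set (tl gs). x < m" "\<forall>x\<in>set (butlast gs). x < m"
  proof -
    obtain x xs where "gs = x # xs" using g(2) by (cases gs) auto
    then show "hd gs < m" "\<forall>x\<in>set (tl gs). x < m" "\<forall>x\<in>set (butlast gs). x < m"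
      using g(4) by (auto dest: in_set_butlastD)
  qed
  show "bar_d m l \<in> BQ m n" unfolding g(1) bar_d_cons
    using g m_pos length_mrg set_mrg
    by (intro BQ_add BQ_sum BQ_single) (auto simp: bar_basis_def hs)
qed


lemma sd_list_cons: "sd_list m \<phi> h \<gamma> (y # ys) = ((h + \<phi> \<gamma> y) mod m) # map (\<phi> \<gamma>) ys"
  by (simp add: sd_list_def)

lemma eqv_bar_d: "eqv (Suc n) (bar_d m)"
proof (unfold eqv_def, intro ballI allI impI)
  fix l h \<gamma> assume l: "l \<in> bar_basis m (Suc n)" and h: "h < m" and \<gamma>: "\<gamma> \<in> carrier \<Gamma>"
  then obtain g gs where g: "l = g # gs" "length gs = Suc n" "g < m" "set gs \<subseteq> {..<m}"
    by (cases l) (auto simp: bar_basis_def)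
  have ne: "gs \<noteq> []" using g by auto
  let ?g' = "(h + \<phi> \<gamma> g) mod m"
  have xm: "hd gs < m" using subsetD[OF g(4) hd_in_set[OF ne]] by simp
  have e1: "(?g' + \<phi> \<gamma> (hd gs)) mod m = (h + \<phi> \<gamma> ((g + hd gs) mod m)) mod m"
    using phi_add[OF \<gamma> g(3) xm] by (simp add: mod_add_left_eq mod_add_right_eq add.assoc)
  have S: "(\<Sum>i\<in>{1..<length gs}. Poly_Mapping.single (?g' # mrg m (map (\<phi> \<gamma>) gs) i) ((-1::rat) ^ i))
        = (\<Sum>i\<in>{1..<length gs}. Poly_Mapping.single (?g' # map (\<phi> \<gamma>) (mrg m gs i)) ((-1) ^ i))"
    by (rule sum.cong) (use map_mrg[OF _ _ g(4) \<gamma>] in auto)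
  have "bar_d m (sd_list m \<phi> h \<gamma> l) = bar_d m (?g' # map (\<phi> \<gamma>) gs)"
    using g by (simp add: sd_list_cons)
  also have "\<dots> = Poly_Mapping.single (((h + \<phi> \<gamma> ((g + hd gs) mod m)) mod m) # map (\<phi> \<gamma>) (tl gs)) 1
     + (\<Sum>i\<in>{1..<length gs}. Poly_Mapping.single (?g' # map (\<phi> \<gamma>) (mrg m gs i)) ((-1) ^ i))
     + Poly_Mapping.single (?g' # map (\<phi> \<gamma>) (butlast gs)) ((-1) ^ length gs)"
    unfolding bar_d_cons S hd_map[OF ne] e1 map_tl[symmetric] map_butlast length_map ..
  also have "\<dots> = sd_act m \<phi> h \<gamma> (bar_d m l)"
    unfolding g(1) bar_d_cons sd_act_add sd_act_sum sd_act_single sd_list_cons ..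
  finally show "bar_d m (sd_list m \<phi> h \<gamma> l) = sd_act m \<phi> h \<gamma> (bar_d m l)" .
qed


lemma sc_cons: "sc m (y # ys) = (\<Sum>j<m. Poly_Mapping.single (j # ((y + m - j) mod m) # ys) (1 / of_nat m))"
  by (simp add: sc_def)

lemma homotopy:
  assumes l: "l \<in> bar_basis m (Suc n)"
  shows "qlin (bar_d m) (sc m l) + qlin (sc m) (bar_d m l) = Poly_Mapping.single l 1"
proof -
  obtain g gs where g: "l = g # gs" "length gs = Suc n" "g < m" "set gs \<subseteq> {..<m}"
    using l by (cases l) (auto simp: bar_basis_def)
  have ne: "gs \<noteq> []" using g by auto
  define q :: rat where "q = 1 / of_nat m"
  define k where "k = length gs"
  define x where "x j = (g + m - j) mod m" for j
  define y where "y j = ((g + hd gs) mod m + m - j) mod m" for j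
  define C where "C j = Poly_Mapping.single (j # y j # tl gs) q
      + (\<Sum>i\<in>{1..<k}. Poly_Mapping.single (j # x j # mrg m gs i) ((-1) ^ i * q))
      + Poly_Mapping.single (j # x j # butlast gs) ((-1) ^ k * q)" for j
  have k1: "1 \<le> k" using g k_def by simp
  have B: "bar_d m (j # x j # gs) = Poly_Mapping.single (g # gs) 1 + Poly_Mapping.single (j # y j # tl gs) (-1)
      + (\<Sum>i\<in>{1..<k}. Poly_Mapping.single (j # x j # mrg m gs i) (- ((-1) ^ i)))
      + Poly_Mapping.single (j # x j # butlast gs) (- ((-1) ^ k))" if j: "j < m" for j
  proof -
    have s1: "(j + x j) mod m = g" using modsub3[OF j g(3)] by (simp add: x_def)
    have s2: "(x j + hd gs) mod m = y j" using modsub2[OF j g(3)] by (simp add: x_def y_def)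
    have "{1..<Suc k} = insert 1 {Suc 1..<Suc k}" using k1 by auto
    then have "(\<Sum>i\<in>{1..<Suc k}. Poly_Mapping.single (j # mrg m (x j # gs) i) ((-1::rat) ^ i))
        = Poly_Mapping.single (j # mrg m (x j # gs) 1) (-1)
          + (\<Sum>i\<in>{Suc 1..<Suc k}. Poly_Mapping.single (j # mrg m (x j # gs) i) ((-1) ^ i))"
      by (simp add: sum.insert)
    also have "(\<Sum>i\<in>{Suc 1..<Suc k}. Poly_Mapping.single (j # mrg m (x j # gs) i) ((-1::rat) ^ i))
        = (\<Sum>i\<in>{1..<k}. Poly_Mapping.single (j # mrg m (x j # gs) (Suc i)) ((-1) ^ Suc i))"
      by (rule sum.shift_bounds_Suc_ivl)
    also have "\<dots> = (\<Sum>i\<in>{1..<k}. Poly_Mapping.single (j # x j # mrg m gs i) (- ((-1) ^ i)))"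
      by (rule sum.cong) (auto simp: mrg_Cons)
    finally have S: "(\<Sum>i\<in>{1..<Suc k}. Poly_Mapping.single (j # mrg m (x j # gs) i) ((-1::rat) ^ i))
        = Poly_Mapping.single (j # y j # tl gs) (-1) + (\<Sum>i\<in>{1..<k}. Poly_Mapping.single (j # x j # mrg m gs i) (- ((-1) ^ i)))"
      using mrg_Cons1[OF ne] s2 by simp
    have bl: "butlast (x j # gs) = x j # butlast gs" using ne by simp
    show ?thesis
      unfolding bar_d_cons list.sel length_Cons s1 S bl k_def[symmetric] by simp
  qed
  have A: "qlin (bar_d m) (sc m l) = (\<Sum>j<m. qscale q (bar_d m (j # x j # gs)))"
    unfolding g(1) sc_cons qlin_sum qlin_single q_def x_def ..
  have Cs: "qlin (sc m) (bar_d m l) = (\<Sum>j<m. C j)"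
  proof -
    have "qlin (sc m) (bar_d m l) = sc m (((g + hd gs) mod m) # tl gs)
        + (\<Sum>i\<in>{1..<k}. qscale ((-1) ^ i) (sc m (g # mrg m gs i)))
        + qscale ((-1) ^ k) (sc m (g # butlast gs))"
      unfolding g(1) bar_d_cons qlin_add qlin_sum qlin_single k_def by simp
    also have "\<dots> = (\<Sum>j<m. Poly_Mapping.single (j # y j # tl gs) q)
        + (\<Sum>i\<in>{1..<k}. \<Sum>j<m. Poly_Mapping.single (j # x j # mrg m gs i) ((-1) ^ i * q))
        + (\<Sum>j<m. Poly_Mapping.single (j # x j # butlast gs) ((-1) ^ k * q))"
      unfolding sc_cons qscale_sum qscale_single x_def y_def q_def ..
    also have "\<dots> = (\<Sum>j<m. C j)"
      unfolding C_def sum.distrib sum.swap[of _ "{1..<k}" "{..<m}"] ..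
    finally show ?thesis .
  qed
  have P: "qscale q (bar_d m (j # x j # gs)) + C j = Poly_Mapping.single (g # gs) q" if j: "j < m" for j
    unfolding B[OF j] C_def
    by (simp add: qscale_add qscale_diff qscale_sum single_uminus sum_negf mult.commute[of q] flip: mult_minus_right)
  have "qlin (bar_d m) (sc m l) + qlin (sc m) (bar_d m l) = (\<Sum>j<m. Poly_Mapping.single (g # gs) q)"
    unfolding A Cs sum.distrib[symmetric] using P by (intro sum.cong) auto
  also have "\<dots> = Poly_Mapping.single (g # gs) (of_nat m * q)"
    by (induction m) (simp_all add: single_add algebra_simps)
  also have "of_nat m * q = 1" using m_pos by (simp add: q_def)
  finally show ?thesis using g by simp
qed

end



lemma triv_quot:
  fixes G :: "('x \<Rightarrow>\<^sub>0 int) set monoid" and D :: "('w \<Rightarrow>\<^sub>0 int) \<Rightarrow> ('x \<Rightarrow>\<^sub>0 int)"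
  assumes mult: "\<And>A B. A \<otimes>\<^bsub>G\<^esub> B = A <#>\<^bsub>free_Abelian_group S\<^esub> B"
  and Hs: "asub Hs"
  and D: "\<And>x y. D (x + y) = D x + D y"
  and Src: "0 \<in> Src" "\<And>a b. a \<in> Src \<Longrightarrow> b \<in> Src \<Longrightarrow> a + b \<in> Src" "\<And>a b. a \<in> Src \<Longrightarrow> b \<in> Src \<Longrightarrow> a - b \<in> Src"
  and Bset: "Bset = (\<lambda>c. (\<lambda>h. h + D c) ` Hs) ` Src"
  and Z: "Z \<noteq> {}" "\<And>Y. Y \<in> Z \<Longrightarrow> \<exists>y c'. Y = (\<lambda>h. h + y) ` Hs \<and> c' \<in> Src \<and> y - D c' \<in> Hs"
  shows "carrier (G\<lparr>carrier := Z\<rparr> Mod Bset) = {Bset}" and "Bset <#>\<^bsub>G\<^esub> Bset = Bset"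
proof -
  have D0: "D 0 = 0" using D[of 0 0] by simp
  have Dd: "D (a - b) = D a - D b" for a b using D[of "a - b" b] by (simp add: algebra_simps)
  have prod: "(\<lambda>h. h + a) ` Hs \<otimes>\<^bsub>G\<^esub> (\<lambda>h. h + b) ` Hs = (\<lambda>h. h + (a + b)) ` Hs" for a b
    unfolding mult set_mult_free using rc_mult[OF Hs] by simp
  have rc_eq: "(\<lambda>h. h + a) ` Hs = (\<lambda>h. h + b) ` Hs" if "a - b \<in> Hs" for a b
    using rc_eq_iff[OF Hs] that by blast
  have coset: "Bset #>\<^bsub>G\<lparr>carrier := Z\<rparr>\<^esub> Y = Bset" if Y: "Y \<in> Z" for Y
  proof -
    obtain y c' where yc: "Y = (\<lambda>h. h + y) ` Hs" "c' \<in> Src" "y - D c' \<in> Hs" using Z(2)[OF Y] by blast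
    have "Bset #>\<^bsub>G\<lparr>carrier := Z\<rparr>\<^esub> Y = (\<lambda>b. b \<otimes>\<^bsub>G\<^esub> Y) ` Bset"
      by (auto simp: r_coset_def)
    also have "\<dots> = Bset"
    proof (intro equalityI subsetI)
      fix z assume "z \<in> (\<lambda>b. b \<otimes>\<^bsub>G\<^esub> Y) ` Bset"
      then obtain c where c: "c \<in> Src" "z = (\<lambda>h. h + D c) ` Hs \<otimes>\<^bsub>G\<^esub> Y" using Bset by auto
      then have "z = (\<lambda>h. h + (D c + y)) ` Hs" using yc prod by simp
      also have "\<dots> = (\<lambda>h. h + D (c + c')) ` Hs"
        by (rule rc_eq) (use yc(3) in \<open>simp add: D algebra_simps\<close>)
      finally show "z \<in> Bset" using Bset Src(2)[OF c(1) yc(2)] by auto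
    next
      fix z assume "z \<in> Bset"
      then obtain c where c: "c \<in> Src" "z = (\<lambda>h. h + D c) ` Hs" using Bset by auto
      have "z = (\<lambda>h. h + (D (c - c') + y)) ` Hs"
        unfolding c(2) by (rule rc_eq) (use asub_uminus[OF Hs yc(3)] in \<open>simp add: Dd algebra_simps\<close>)
      also have "\<dots> = (\<lambda>h. h + D (c - c')) ` Hs \<otimes>\<^bsub>G\<^esub> Y" using yc prod by simp
      finally show "z \<in> (\<lambda>b. b \<otimes>\<^bsub>G\<^esub> Y) ` Bset" using Bset Src(3)[OF c(1) yc(2)] by auto
    qed
    finally show ?thesis .
  qed
  show "carrier (G\<lparr>carrier := Z\<rparr> Mod Bset) = {Bset}"
    unfolding FactGroup_def RCOSETS_def using coset Z(1) by auto
  show "Bset <#>\<^bsub>G\<^esub> Bset = Bset"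
  proof (intro equalityI subsetI)
    fix z assume "z \<in> Bset <#>\<^bsub>G\<^esub> Bset"
    then obtain c1 c2 where c: "c1 \<in> Src" "c2 \<in> Src" "z = (\<lambda>h. h + D c1) ` Hs \<otimes>\<^bsub>G\<^esub> (\<lambda>h. h + D c2) ` Hs"
      unfolding set_mult_def Bset by auto
    then have "z = (\<lambda>h. h + D (c1 + c2)) ` Hs" using prod by (simp add: D)
    then show "z \<in> Bset" using Bset Src(2)[OF c(1,2)] by auto
  next
    fix z assume "z \<in> Bset"
    then obtain c where c: "c \<in> Src" "z = (\<lambda>h. h + D c) ` Hs" using Bset by auto
    then have "z = (\<lambda>h. h + D c) ` Hs \<otimes>\<^bsub>G\<^esub> (\<lambda>h. h + D 0) ` Hs" using prod[of "D c" "D 0"] D0 by simp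
    then show "z \<in> Bset <#>\<^bsub>G\<^esub> Bset" unfolding set_mult_def Bset using c(1) Src(1) by blast
  qed
qed

lemma triv_iso:
  assumes "carrier G1 = {a}" "carrier G2 = {\<one>\<^bsub>G2\<^esub>}" "\<one>\<^bsub>G2\<^esub> \<otimes>\<^bsub>G2\<^esub> \<one>\<^bsub>G2\<^esub> = \<one>\<^bsub>G2\<^esub>"
  shows "G1 \<cong> G2"
proof (rule is_isoI)
  show "(\<lambda>_. \<one>\<^bsub>G2\<^esub>) \<in> iso G1 G2"
    unfolding iso_def hom_def bij_betw_def inj_on_def using assms by auto
qed




context zsetup begin

abbreviation "CC k \<equiv> chainC m \<Gamma> \<phi> \<rho> \<sigma> k"

lemma carrier_chainC: "carrier (CC k) = (\<lambda>a. (\<lambda>h. h + a) ` H k) ` carrier (F k)"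
  unfolding chainC_def FactGroup_def RCOSETS_def tens_free_def r_coset_free by auto

lemma mult_chainC: "A \<otimes>\<^bsub>CC k\<^esub> B = A <#>\<^bsub>free_Abelian_group (BQ m k \<times> UNIV)\<^esub> B"
  unfolding chainC_def FactGroup_def tens_free_def by simp

lemma one_chainC: "\<one>\<^bsub>CC k\<^esub> = H k"
  unfolding chainC_def FactGroup_def by simp

lemma F_zero: "0 \<in> carrier (F k)" by (simp add: tens_free_def)
lemma F_add: "a \<in> carrier (F k) \<Longrightarrow> b \<in> carrier (F k) \<Longrightarrow> a + b \<in> carrier (F k)"
  using keys_add[of a b] by (auto simp: tens_free_def)
lemma F_diff: "a \<in> carrier (F k) \<Longrightarrow> b \<in> carrier (F k) \<Longrightarrow> a - b \<in> carrier (F k)"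
  using keys_diff[of a b] by (auto simp: tens_free_def)

lemma induced_tm:
  assumes "good k j f" "eqv k f"
  shows "induced (tens_map f) (H j) ((\<lambda>h. h + a) ` H k) = (\<lambda>r. r + tens_map f a) ` H j"
  by (rule induced_rc[OF asub_H asub_zero[OF asub_H] tens_map_add tens_map_H[OF assms]])

lemma rc_in: "(\<lambda>r. r + c) ` H j = H j \<Longrightarrow> c \<in> H j"
  using asub_zero[OF asub_H, of j] by (metis (no_types, lifting) add_0 imageI)

lemma rc_self: "(\<lambda>r. r + 0) ` H j = H j" by simp

lemma bdry_rc: "bdry m \<Gamma> \<phi> \<rho> \<sigma> (Suc j) ((\<lambda>h. h + a) ` H (Suc j)) = (\<lambda>r. r + tens_map (bar_d m) a) ` H j"
  unfolding bdry_def using induced_tm[OF good_bar_d eqv_bar_d] by simp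

lemma homology_triv:
  shows "carrier (QHGamma m \<Gamma> \<phi> \<rho> \<sigma> (Suc j)) = {bdry m \<Gamma> \<phi> \<rho> \<sigma> (Suc j + 1) ` carrier (CC (Suc j + 1))}"
  unfolding QHGamma_def
proof (rule triv_quot(1)[where D = "tens_map (bar_d m)" and Hs = "H (Suc j)" and Src = "carrier (F (Suc (Suc j)))"])
  show "\<And>A B. A \<otimes>\<^bsub>CC (Suc j)\<^esub> B = A <#>\<^bsub>free_Abelian_group (BQ m (Suc j) \<times> UNIV)\<^esub> B"
    by (rule mult_chainC)
  show "asub (H (Suc j))" by (rule asub_H)
  show "\<And>x y. tens_map (bar_d m) (x + y) = tens_map (bar_d m) x + tens_map (bar_d m) y" by (rule tens_map_add)
  show "0 \<in> carrier (F (Suc (Suc j)))" by (rule F_zero)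
  show "\<And>a b. a \<in> carrier (F (Suc (Suc j))) \<Longrightarrow> b \<in> carrier (F (Suc (Suc j))) \<Longrightarrow> a + b \<in> carrier (F (Suc (Suc j)))" by (rule F_add)
  show "\<And>a b. a \<in> carrier (F (Suc (Suc j))) \<Longrightarrow> b \<in> carrier (F (Suc (Suc j))) \<Longrightarrow> a - b \<in> carrier (F (Suc (Suc j)))" by (rule F_diff)
  show "bdry m \<Gamma> \<phi> \<rho> \<sigma> (Suc j + 1) ` carrier (CC (Suc j + 1)) = (\<lambda>c. (\<lambda>h. h + tens_map (bar_d m) c) ` H (Suc j)) ` carrier (F (Suc (Suc j)))"
    unfolding carrier_chainC image_comp using bdry_rc[of "Suc j"] by (simp add: comp_def)
  let ?Z = "{Y \<in> carrier (CC (Suc j)). bdry m \<Gamma> \<phi> \<rho> \<sigma> (Suc j) Y = \<one>\<^bsub>CC (Suc j - 1)\<^esub>}"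
  have "H (Suc j) \<in> ?Z"
  proof -
    have "H (Suc j) = (\<lambda>h. h + 0) ` H (Suc j)" by simp
    moreover have "(\<lambda>h. h + 0) ` H (Suc j) \<in> carrier (CC (Suc j))" unfolding carrier_chainC using F_zero by blast
    moreover have "bdry m \<Gamma> \<phi> \<rho> \<sigma> (Suc j) ((\<lambda>h. h + 0) ` H (Suc j)) = H j" unfolding bdry_rc by simp
    ultimately show ?thesis by (simp add: one_chainC)
  qed
  then show "?Z \<noteq> {}" by blast
  fix Y assume Y: "Y \<in> ?Z"
  then obtain y where y: "y \<in> carrier (F (Suc j))" "Y = (\<lambda>h. h + y) ` H (Suc j)"
    unfolding carrier_chainC by blast
  have dy: "tens_map (bar_d m) y \<in> H j"
    using Y y bdry_rc[of j y] rc_in by (simp add: one_chainC)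
  let ?c = "tens_map (sc m) y"
  have c: "?c \<in> carrier (F (Suc (Suc j)))" by (rule tens_map_carrier[OF good_sc y(1)])
  let ?f = "\<lambda>l. qlin (bar_d m) (sc m l)" and ?g = "\<lambda>l. qlin (sc m) (bar_d m l)"
  have gf: "good (Suc j) (Suc j) ?f"
    using good_sc[of "Suc j"] good_bar_d[of "Suc j"] unfolding good_def by (auto intro: BQ_qlin)
  have gg: "good (Suc j) (Suc j) ?g"
    using good_sc[of j] good_bar_d[of j] unfolding good_def by (auto intro: BQ_qlin)
  have 1: "tens_map (\<lambda>l. ?f l + ?g l) y - (tens_map ?f y + tens_map ?g y) \<in> H (Suc j)"
    by (rule tens_map_fun_add[OF gf gg y(1)])
  have 2: "tens_map (\<lambda>l. ?f l + ?g l) y = y"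
    using tens_map_cong[OF y(1), of "\<lambda>l. ?f l + ?g l" "\<lambda>l. Poly_Mapping.single l 1"] homotopy tens_map_id
    by simp
  have 3: "tens_map ?g y \<in> H (Suc j)"
    using tens_map_H[OF good_sc eqv_sc, of j] dy tens_map_compose[of "sc m" "bar_d m" y] by auto
  have 4: "tens_map ?f y = tens_map (bar_d m) ?c" by (simp add: tens_map_compose)
  have e: "y - tens_map (bar_d m) ?c = (tens_map (\<lambda>l. ?f l + ?g l) y - (tens_map ?f y + tens_map ?g y)) + tens_map ?g y"
    using 2 4 by simp
  have "(tens_map (\<lambda>l. ?f l + ?g l) y - (tens_map ?f y + tens_map ?g y)) + tens_map ?g y \<in> H (Suc j)"
    by (rule asub_add[OF asub_H 1 3])
  then have "y - tens_map (bar_d m) ?c \<in> H (Suc j)" by (subst e)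
  then show "\<exists>y c'. Y = (\<lambda>h. h + y) ` H (Suc j) \<and> c' \<in> carrier (F (Suc (Suc j))) \<and> y - tens_map (bar_d m) c' \<in> H (Suc j)"
    using y c by blast
qed


lemma qlin_sq: "qlin (sq c) x = qscale c x"
proof -
  have "qlin (sq c) x = qlin (\<lambda>l. qscale c (Poly_Mapping.single l 1)) x" by (rule qlin_cong) (simp add: sq_def)
  also have "\<dots> = qscale c x" by (simp only: qlin_fun_qscale qlin_id)
  finally show ?thesis .
qed

lemma kermod_triv:
  assumes gf: "good 0 0 fD" "eqv 0 fD" and gg: "good 0 0 gN" "eqv 0 gN"
    and ident: "\<And>l. l \<in> bar_basis m 0 \<Longrightarrow> qscale cg (gN l) + qscale cf (fD l) = Poly_Mapping.single l 1"
  shows "carrier (ker_mod_im (Vsp m \<Gamma> \<phi> \<rho> \<sigma>) (induced (tens_map fD) (H 0)) (induced (tens_map gN) (H 0)))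
           = {induced (tens_map gN) (H 0) ` carrier (Vsp m \<Gamma> \<phi> \<rho> \<sigma>)}"
    and "induced (tens_map gN) (H 0) ` carrier (Vsp m \<Gamma> \<phi> \<rho> \<sigma>) <#>\<^bsub>Vsp m \<Gamma> \<phi> \<rho> \<sigma>\<^esub> induced (tens_map gN) (H 0) ` carrier (Vsp m \<Gamma> \<phi> \<rho> \<sigma>)
           = induced (tens_map gN) (H 0) ` carrier (Vsp m \<Gamma> \<phi> \<rho> \<sigma>)"
proof -
  let ?Z = "{Y \<in> carrier (CC 0). induced (tens_map fD) (H 0) Y = \<one>\<^bsub>CC 0\<^esub>}"
  let ?B = "induced (tens_map gN) (H 0) ` carrier (CC 0)"
  have Bset: "?B = (\<lambda>c. (\<lambda>h. h + tens_map gN c) ` H 0) ` carrier (F 0)"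
    unfolding carrier_chainC image_comp using induced_tm[OF gg] by (simp add: comp_def)
  have Zne: "?Z \<noteq> {}"
  proof -
    have "(\<lambda>h. h + 0) ` H 0 \<in> carrier (CC 0)" unfolding carrier_chainC using F_zero by blast
    moreover have "induced (tens_map fD) (H 0) ((\<lambda>h. h + 0) ` H 0) = H 0" unfolding induced_tm[OF gf] by simp
    ultimately show ?thesis by (auto simp: one_chainC)
  qed
  have Zc: "\<exists>y c'. Y = (\<lambda>h. h + y) ` H 0 \<and> c' \<in> carrier (F 0) \<and> y - tens_map gN c' \<in> H 0" if Y: "Y \<in> ?Z" for Y
  proof -
    obtain y where y: "y \<in> carrier (F 0)" "Y = (\<lambda>h. h + y) ` H 0"
      using Y unfolding carrier_chainC by blast
    have dy: "tens_map fD y \<in> H 0"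
      using Y y induced_tm[OF gf, of y] rc_in by (simp add: one_chainC)
    let ?c = "tens_map (sq cg) y"
    have c: "?c \<in> carrier (F 0)" by (rule tens_map_carrier[OF good_sq y(1)])
    let ?f = "\<lambda>l. qscale cg (gN l)" and ?g = "\<lambda>l. qscale cf (fD l)"
    have g1: "good 0 0 ?f" using gg(1) unfolding good_def by (auto intro: BQ_qscale)
    have g2: "good 0 0 ?g" using gf(1) unfolding good_def by (auto intro: BQ_qscale)
    have 1: "tens_map (\<lambda>l. ?f l + ?g l) y - (tens_map ?f y + tens_map ?g y) \<in> H 0"
      by (rule tens_map_fun_add[OF g1 g2 y(1)])
    have 2: "tens_map (\<lambda>l. ?f l + ?g l) y = y"
      using tens_map_cong[OF y(1), of "\<lambda>l. ?f l + ?g l" "\<lambda>l. Poly_Mapping.single l 1"] ident tens_map_id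
      by simp
    have "tens_map (sq cf) (tens_map fD y) \<in> H 0" using tens_map_H[OF good_sq eqv_sq] dy by blast
    then have 3: "tens_map ?g y \<in> H 0" by (simp add: tens_map_compose qlin_sq)
    have 4: "tens_map ?f y = tens_map gN ?c"
      by (simp add: tens_map_compose sq_def qlin_fun_qscale)
    have e: "y - tens_map gN ?c = (tens_map (\<lambda>l. ?f l + ?g l) y - (tens_map ?f y + tens_map ?g y)) + tens_map ?g y"
      using 2 4 by simp
    have "(tens_map (\<lambda>l. ?f l + ?g l) y - (tens_map ?f y + tens_map ?g y)) + tens_map ?g y \<in> H 0"
      by (rule asub_add[OF asub_H 1 3])
    then have "y - tens_map gN ?c \<in> H 0" by (subst e)
    then show ?thesis using y c by blast
  qed
  note tq = triv_quot[OF mult_chainC asub_H tens_map_add F_zero F_add F_diff Bset Zne Zc]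
  show "carrier (ker_mod_im (Vsp m \<Gamma> \<phi> \<rho> \<sigma>) (induced (tens_map fD) (H 0)) (induced (tens_map gN) (H 0)))
           = {induced (tens_map gN) (H 0) ` carrier (Vsp m \<Gamma> \<phi> \<rho> \<sigma>)}"
    using tq(1) unfolding ker_mod_im_def Vsp_def by simp
  show "induced (tens_map gN) (H 0) ` carrier (Vsp m \<Gamma> \<phi> \<rho> \<sigma>) <#>\<^bsub>Vsp m \<Gamma> \<phi> \<rho> \<sigma>\<^esub> induced (tens_map gN) (H 0) ` carrier (Vsp m \<Gamma> \<phi> \<rho> \<sigma>)
           = induced (tens_map gN) (H 0) ` carrier (Vsp m \<Gamma> \<phi> \<rho> \<sigma>)"
    using tq(2) unfolding Vsp_def by simp
qed

lemma ident_ND: "l \<in> bar_basis m 0 \<Longrightarrow> qscale (1 / of_nat m) (mulN m l) + qscale (- 1 / of_nat m) (mulD m l) = Poly_Mapping.single l 1"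
proof -
  assume l: "l \<in> bar_basis m 0"
  then obtain g where g: "l = [g]" "g < m" by (cases l) (auto simp: bar_basis_def)
  have "mulD m l = mulN m l - Poly_Mapping.single [g] (of_nat m)" using mulD_eq g by simp
  then have "qscale (1 / of_nat m) (mulN m l) + qscale (- 1 / of_nat m) (mulD m l)
      = qscale (1 / of_nat m) (Poly_Mapping.single [g] (of_nat m))"
    by (simp add: qscale_diff qscale_neg flip: single_uminus)
  also have "\<dots> = Poly_Mapping.single l 1" using m_pos g by simp
  finally show ?thesis .
qed


lemma kermod_iso:
  assumes gf: "good 0 0 fD" "eqv 0 fD" and gg: "good 0 0 gN" "eqv 0 gN"
    and ident: "\<And>l. l \<in> bar_basis m 0 \<Longrightarrow> qscale cg (gN l) + qscale cf (fD l) = Poly_Mapping.single l 1"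
  shows "QHGamma m \<Gamma> \<phi> \<rho> \<sigma> (Suc j) \<cong> ker_mod_im (Vsp m \<Gamma> \<phi> \<rho> \<sigma>) (induced (tens_map fD) (H 0)) (induced (tens_map gN) (H 0))"
proof (rule triv_iso[OF homology_triv])
  note kt = kermod_triv[OF gf gg ident]
  let ?K = "ker_mod_im (Vsp m \<Gamma> \<phi> \<rho> \<sigma>) (induced (tens_map fD) (H 0)) (induced (tens_map gN) (H 0))"
  have one: "\<one>\<^bsub>?K\<^esub> = induced (tens_map gN) (H 0) ` carrier (Vsp m \<Gamma> \<phi> \<rho> \<sigma>)"
    unfolding ker_mod_im_def FactGroup_def by simp
  show "carrier ?K = {\<one>\<^bsub>?K\<^esub>}" using kt(1) one by simp
  have "\<one>\<^bsub>?K\<^esub> \<otimes>\<^bsub>?K\<^esub> \<one>\<^bsub>?K\<^esub> = \<one>\<^bsub>?K\<^esub> <#>\<^bsub>Vsp m \<Gamma> \<phi> \<rho> \<sigma>\<^esub> \<one>\<^bsub>?K\<^esub>"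
    unfolding ker_mod_im_def FactGroup_def set_mult_def by simp
  then show "\<one>\<^bsub>?K\<^esub> \<otimes>\<^bsub>?K\<^esub> \<one>\<^bsub>?K\<^esub> = \<one>\<^bsub>?K\<^esub>" using kt(2) one by simp
qed

end

theorem theorem4p3:
  fixes m :: nat and \<Gamma> :: "('g, 'b) monoid_scheme" and \<phi> :: "'g \<Rightarrow> nat \<Rightarrow> nat"
    and \<rho> :: "nat \<Rightarrow> 'a::ab_group_add \<Rightarrow> 'a" and \<sigma> :: "'g \<Rightarrow> 'a \<Rightarrow> 'a" and n :: nat
  assumes "m \<ge> 2"
    and "group \<Gamma>"
    and "zm_aut_action m \<Gamma> \<phi>"
    and "zm_action_nontrivial m \<Gamma> \<phi>"
    and "sd_module m \<Gamma> \<phi> \<rho> \<sigma>"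
    and "n \<ge> 1"
  shows "QHGamma m \<Gamma> \<phi> \<rho> \<sigma> (2 * n - 1)
           \<cong> ker_mod_im (Vsp m \<Gamma> \<phi> \<rho> \<sigma>) (Dstar m \<Gamma> \<phi> \<rho> \<sigma>) (Nstar m \<Gamma> \<phi> \<rho> \<sigma>)
      \<and> QHGamma m \<Gamma> \<phi> \<rho> \<sigma> (2 * n)
           \<cong> ker_mod_im (Vsp m \<Gamma> \<phi> \<rho> \<sigma>) (Nstar m \<Gamma> \<phi> \<rho> \<sigma>) (Dstar m \<Gamma> \<phi> \<rho> \<sigma>)"
proof -
  interpret zsetup m \<Gamma> \<phi> \<rho> \<sigma> by (rule zsetup.intro[OF assms(1-3)])
  have e1: "2 * n - 1 = Suc (2 * n - 2)" and e2: "2 * n = Suc (2 * n - 1)" using assms(6) by auto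
  have i1: "QHGamma m \<Gamma> \<phi> \<rho> \<sigma> (Suc j) \<cong> ker_mod_im (Vsp m \<Gamma> \<phi> \<rho> \<sigma>) (Dstar m \<Gamma> \<phi> \<rho> \<sigma>) (Nstar m \<Gamma> \<phi> \<rho> \<sigma>)" for j
    unfolding Dstar_def Nstar_def
    by (rule kermod_iso[OF good_mulD eqv_mulD good_mulN eqv_mulN ident_ND])
  have i2: "QHGamma m \<Gamma> \<phi> \<rho> \<sigma> (Suc j) \<cong> ker_mod_im (Vsp m \<Gamma> \<phi> \<rho> \<sigma>) (Nstar m \<Gamma> \<phi> \<rho> \<sigma>) (Dstar m \<Gamma> \<phi> \<rho> \<sigma>)" for j
    unfolding Dstar_def Nstar_def
    by (rule kermod_iso[OF good_mulN eqv_mulN good_mulD eqv_mulD, where cg = "- 1 / of_nat m" and cf = "1 / of_nat m"])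
       (subst add.commute, erule ident_ND)
  show ?thesis using i1[of "2 * n - 2"] i2[of "2 * n - 1"] e1 e2 by simp
qed


end
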